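(* Let $q=p^h$ with $p$ an odd prime, and let $a,b,c\in{\rm GF}(q)$ be such that the polynomial $X^3+aX^2+bX+c$ is irreducible over ${\rm GF}(q)$. For $r,s,t\in{\rm GF}(q)$ let $$M_{r,s,t}=\begin{pmatrix}1&0&r&r^2-ar+s&t\\0&1&s&2rs-t&s^2+bs-cr\\0&0&1&2r&2s\\0&0&0&1&0\\0&0&0&0&1\end{pmatrix}.$$ Then $G=\{M_{r,s,t} : r,s,t\in{\rm GF}(q)\}$ is a group (under matrix multiplication) which is a $p$-group of order $q^3$. *)

theory Defs
  imports "HOL-Analysis.Analysis" "HOL-Computational_Algebra.Polynomial" "HOL-Algebra.Group"
begin

definition Mrst :: "'a::field \<Rightarrow> 'a \<Rightarrow> 'a \<Rightarrow> 'a \<Rightarrow> 'a \<Rightarrow> 'a \<Rightarrow> 'a^5^5" where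
  "Mrst a b c r s t = vector [
     vector [1, 0, r, r^2 - a * r + s, t],
     vector [0, 1, s, 2 * r * s - t, s^2 + b * s - c * r],
     vector [0, 0, 1, 2 * r, 2 * s ],
     vector [0, 0, 0, 1, 0],
     vector [0, 0, 0, 0, 1]]"

definition Gset :: "'a::field \<Rightarrow> 'a \<Rightarrow> 'a \<Rightarrow> ('a^5^5) set" where
  "Gset a b c = {Mrst a b c r s t | r s t. True}"

definition matgrp :: "('a::semiring_1^'n^'n) set \<Rightarrow> ('a^'n^'n) monoid" where
  "matgrp S = \<lparr>carrier = S, mult = (\<lambda>A B. A ** B), one = mat 1\<rparr>"

end

theory Submission imports Defs begin
lemma exhaust_5: fixes x :: 5 shows "x = 1 \<or> x = 2 \<or> x = 3 \<or> x = 4 \<or> x = 5"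
proof (induct x)
  case (of_int z)
  then have "z = 0 \<or> z = 1 \<or> z = 2 \<or> z = 3 \<or> z = 4" by fastforce
  then show ?case by auto
qed
lemma UNIV_5: "UNIV = {1, 2, 3, 4, 5::5}" using exhaust_5 by auto
lemma sum_5: "sum f (UNIV::5 set) = f 1 + f 2 + f 3 + f 4 + f 5"
  unfolding UNIV_5 by (simp add: ac_simps)
lemma vector_5 [simp]:
 "(vector [x1,x2,x3,x4,x5] ::('a::zero)^5)$1 = x1"
 "(vector [x1,x2,x3,x4,x5] ::('a::zero)^5)$2 = x2"
 "(vector [x1,x2,x3,x4,x5] ::('a::zero)^5)$3 = x3"
 "(vector [x1,x2,x3,x4,x5] ::('a::zero)^5)$4 = x4"
 "(vector [x1,x2,x3,x4,x5] ::('a::zero)^5)$5 = x5"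
  unfolding vector_def by simp_all

lemma Mmult: "Mrst a b c r s t ** Mrst a b c r2 s2 t2 = Mrst a b c (r+r2) (s+s2) (t+t2+2* r * s2)"
  unfolding matrix_matrix_mult_def vec_eq_iff
  apply (intro allI)
  subgoal for i j
    using exhaust_5[of i] exhaust_5[of j]
    by (auto simp: Mrst_def sum_5 algebra_simps power2_eq_square)
  done

lemma Mone: "Mrst a b c 0 0 0 = mat 1"
  unfolding vec_eq_iff mat_def
  apply (intro allI)
  subgoal for i j
    using exhaust_5[of i] exhaust_5[of j]
    by (auto simp: Mrst_def)
  done

lemma Minj: "Mrst a b c r s t = Mrst a b c r2 s2 t2 \<Longrightarrow> r = r2 \<and> s = s2 \<and> t = t2"
  unfolding vec_eq_iff Mrst_def
  by (metis vector_5)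

lemma Gset_eq: "Gset a b c = (\<lambda>(r,s,t). Mrst a b c r s t) ` UNIV"
  unfolding Gset_def by (auto simp: image_iff) (metis case_prod_conv)

theorem lemma2p1:
  fixes a b c :: "'a::{field,finite}" and p h :: nat
  assumes "prime p" and "odd p" and "CARD('a) = p ^ h"
    and "irreducible [:c, b, a, 1:]"
  shows "group (matgrp (Gset a b c))
         \<and> card (carrier (matgrp (Gset a b c))) = (p ^ h) ^ 3
         \<and> (\<exists>n. card (carrier (matgrp (Gset a b c))) = p ^ n)"
proof -
  have inj: "inj (\<lambda>(r,s,t). Mrst a b c r s t)"
    by (auto simp: inj_def dest: Minj)
  have card: "card (Gset a b c) = (p ^ h) ^ 3"
    unfolding Gset_eq using inj assms(3)
    by (simp add: card_image card_cartesian_product power3_eq_cube)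
  have grp: "group (matgrp (Gset a b c))"
  proof (rule groupI)
    show "\<And>x y. x \<in> carrier (matgrp (Gset a b c)) \<Longrightarrow> y \<in> carrier (matgrp (Gset a b c)) \<Longrightarrow>
      x \<otimes>\<^bsub>matgrp (Gset a b c)\<^esub> y \<in> carrier (matgrp (Gset a b c))"
      by (auto simp: matgrp_def Gset_def Mmult) blast
    show "\<one>\<^bsub>matgrp (Gset a b c)\<^esub> \<in> carrier (matgrp (Gset a b c))"
      unfolding matgrp_def Gset_def using Mone[of a b c, symmetric] by auto
    show "\<And>x y z. x \<in> carrier (matgrp (Gset a b c)) \<Longrightarrow> y \<in> carrier (matgrp (Gset a b c)) \<Longrightarrow>
      z \<in> carrier (matgrp (Gset a b c)) \<Longrightarrow>
      x \<otimes>\<^bsub>matgrp (Gset a b c)\<^esub> y \<otimes>\<^bsub>matgrp (Gset a b c)\<^esub> z =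
      x \<otimes>\<^bsub>matgrp (Gset a b c)\<^esub> (y \<otimes>\<^bsub>matgrp (Gset a b c)\<^esub> z)"
      by (simp add: matgrp_def matrix_mul_assoc)
    show "\<And>x. x \<in> carrier (matgrp (Gset a b c)) \<Longrightarrow> \<one>\<^bsub>matgrp (Gset a b c)\<^esub> \<otimes>\<^bsub>matgrp (Gset a b c)\<^esub> x = x"
      by (simp add: matgrp_def matrix_mul_lid)
    show "\<And>x. x \<in> carrier (matgrp (Gset a b c)) \<Longrightarrow>
         \<exists>y\<in>carrier (matgrp (Gset a b c)). y \<otimes>\<^bsub>matgrp (Gset a b c)\<^esub> x = \<one>\<^bsub>matgrp (Gset a b c)\<^esub>"
    proof -
      fix x assume "x \<in> carrier (matgrp (Gset a b c))"
      then obtain r s t where x: "x = Mrst a b c r s t" by (auto simp: matgrp_def Gset_def)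
      have "Mrst a b c (-r) (-s) (- t + 2* r * s) ** x = mat 1"
        unfolding x Mmult
      proof -
        have "Mrst a b c (- r + r) (- s + s) (- t + 2 * r * s + t + 2 * (- r) * s) = Mrst a b c 0 0 0"
          by (simp add: algebra_simps)
        then show "Mrst a b c (- r + r) (- s + s) (- t + 2 * r * s + t + 2 * (- r) * s) = mat 1"
          using Mone[of a b c] by simp
      qed
      then show "\<exists>y\<in>carrier (matgrp (Gset a b c)). y \<otimes>\<^bsub>matgrp (Gset a b c)\<^esub> x = \<one>\<^bsub>matgrp (Gset a b c)\<^esub>"
        by (auto simp: matgrp_def Gset_def)
    qed
  qed
  show ?thesis using grp card
    by (auto simp: matgrp_def power_mult[symmetric])
qed

end
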